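(* Assume the setting described in the context with $d=1$ (so $\mathfrak{d}=3H+1$), and let $\alpha,\beta\in\mathbb{R}$, $\rho\in(0,\infty)$ satisfy $\mu(E)=\rho\lambda(E)$ for all $E\in\mathcal{B}([\mathscr{a},\mathscr{b}])$ and $f(x)=\alpha x+\beta$ for all $x\in[\mathscr{a},\mathscr{b}]$. Then (i) there exists $\vartheta\in\mathbb{R}^{\mathfrak{d}}$ such that $\mathcal{L}(\vartheta)=\inf_{\theta\in\mathbb{R}^{\mathfrak{d}}}\mathcal{L}(\theta)=0$, and (ii) for all $\theta\in\mathbb{R}^{\mathfrak{d}}$ with $\mathcal{G}(\theta)=0$ and $\mathcal{L}(\theta)>0$ it holds that $\mathcal{L}(\theta)\ge\frac{\rho\alpha^2(\mathscr{b}-\mathscr{a})^3}{12(2\lfloor H/2\rfloor+1)^4}$.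
   Context: Setting: $d,H,\mathfrak{d}\in\mathbb{N}$ with $\mathfrak{d}=dH+2H+1$, $\mathscr{a}\in\mathbb{R}$, $\mathscr{b}\in(\mathscr{a},\infty)$, $f\in C([\mathscr{a},\mathscr{b}]^d,\mathbb{R})$. For $\theta=(\theta_1,\dots,\theta_{\mathfrak{d}})\in\mathbb{R}^{\mathfrak{d}}$, $i\in\{1,\dots,H\}$, $j\in\{1,\dots,d\}$ put $\mathfrak{w}^\theta_{i,j}=\theta_{(i-1)d+j}$, $\mathfrak{b}^\theta_i=\theta_{Hd+i}$, $\mathfrak{v}^\theta_i=\theta_{H(d+1)+i}$, $\mathfrak{c}^\theta=\theta_{\mathfrak{d}}$. Let $\mathfrak{R}_r\in C^1(\mathbb{R},\mathbb{R})$, $r\in\mathbb{N}$, satisfy for all $x\in\mathbb{R}$ that $\lim_{r\to\infty}\big(|\mathfrak{R}_r(x)-\max\{x,0\}|+|(\mathfrak{R}_r)'(x)-\mathbb{1}_{(0,\infty)}(x)|\big)=0$ and $\sup_{r\in\mathbb{N}}\sup_{y\in[-|x|,|x|]}|(\mathfrak{R}_r)'(y)|<\infty$. Let $\mu$ be a finite measure on $\mathcal{B}([\mathscr{a},\mathscr{b}]^d)$ and $\lambda$ the Lebesgue–Borel measure on $[\mathscr{a},\mathscr{b}]^d$. For $\theta\in\mathbb{R}^{\mathfrak{d}}$, $x\in\mathbb{R}^d$ let $\mathscr{N}^\theta(x)=\mathfrak{c}^\theta+\sum_{i=1}^H\mathfrak{v}^\theta_i\max\{\mathfrak{b}^\theta_i+\sum_{j=1}^d\mathfrak{w}^\theta_{i,j}x_j,0\}$,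 $\mathcal{L}(\theta)=\int_{[\mathscr{a},\mathscr{b}]^d}(f(y)-\mathscr{N}^\theta(y))^2\,\mu(\mathrm{d}y)$, and for $r\in\mathbb{N}$, $\mathfrak{L}_r(\theta)=\int_{[\mathscr{a},\mathscr{b}]^d}\big(f(y)-\mathfrak{c}^\theta-\sum_{i=1}^H\mathfrak{v}^\theta_i\,\mathfrak{R}_r(\mathfrak{b}^\theta_i+\sum_{j=1}^d\mathfrak{w}^\theta_{i,j}y_j)\big)^2\,\mu(\mathrm{d}y)$. Let $\mathcal{G}\colon\mathbb{R}^{\mathfrak{d}}\to\mathbb{R}^{\mathfrak{d}}$ satisfy $\mathcal{G}(\theta)=\lim_{r\to\infty}(\nabla\mathfrak{L}_r)(\theta)$ for every $\theta$ for which this limit exists. $\lfloor\cdot\rfloor$ is the floor function. *)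

theory Defs
  imports "HOL-Analysis.Analysis"
begin

text \<open>Parameter vectors theta in R^(3H+1) are represented as functions nat => real,
  of which only the coordinates 1..3H+1 are used:
  w_i = theta i, b_i = theta (H+i), v_i = theta (2H+i), c = theta (3H+1).\<close>

definition relu_net1 :: "nat \<Rightarrow> (nat \<Rightarrow> real) \<Rightarrow> real \<Rightarrow> real" where
  "relu_net1 H \<theta> x = \<theta> (3*H+1) + (\<Sum>i=1..H. \<theta> (2*H+i) * max (\<theta> (H+i) + \<theta> i * x) 0)"

definition risk1 :: "real measure \<Rightarrow> (real \<Rightarrow> real) \<Rightarrow> nat \<Rightarrow> (nat \<Rightarrow> real) \<Rightarrow> real" where
  "risk1 M f H \<theta> = (\<integral>y. (f y - relu_net1 H \<theta> y)\<^sup>2 \<partial>M)"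

definition risk1_approx :: "real measure \<Rightarrow> (real \<Rightarrow> real) \<Rightarrow> nat \<Rightarrow> (real \<Rightarrow> real) \<Rightarrow> (nat \<Rightarrow> real) \<Rightarrow> real" where
  "risk1_approx M f H Rr \<theta> =
     (\<integral>y. (f y - \<theta> (3*H+1) - (\<Sum>i=1..H. \<theta> (2*H+i) * Rr (\<theta> (H+i) + \<theta> i * y)))\<^sup>2 \<partial>M)"

definition risk1_approx_grad :: "real measure \<Rightarrow> (real \<Rightarrow> real) \<Rightarrow> nat \<Rightarrow> (real \<Rightarrow> real) \<Rightarrow> (nat \<Rightarrow> real) \<Rightarrow> nat \<Rightarrow> real" where
  "risk1_approx_grad M f H Rr \<theta> k = deriv (\<lambda>t. risk1_approx M f H Rr (\<theta>(k := t))) (\<theta> k)"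

end

theory Submission
  imports Defs
begin

lemma integral_quad:
  fixes u v p q r :: real
  assumes "u \<le> v"
  shows "integral {u..v} (\<lambda>y. p + q*y + r*y^2) = p*(v-u) + q*(v^2-u^2)/2 + r*(v^3-u^3)/3"
proof -
  have "((\<lambda>y. p + q*y + r*y^2) has_integral
      ((p * v + q * v^2/2 + r * v^3/3) - (p*u + q*u^2/2 + r*u^3/3))) {u..v}"
    apply (rule fundamental_theorem_of_calculus[OF assms])
    apply (auto simp: has_real_derivative_iff_has_vector_derivative[symmetric] intro!: derivative_eq_intros)
    done
  note I = integral_unique[OF this]
  show ?thesis unfolding I by (simp add: field_simps)
qed

lemma icomb:
  fixes f :: "real \<Rightarrow> real"
  assumes "a \<le> c" "c \<le> b" "f integrable_on {a..b}"
  shows "integral {a..c} f + integral {c..b} f = integral {a..b} f"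
  by (rule Henstock_Kurzweil_Integration.integral_combine[OF assms])

lemma altsum: "(\<Sum>k<n. (-1::real)^k) = (if even n then 0 else 1)"
  by (induction n) auto

lemma relu_piece:
  fixes bb w u v y :: real
  assumes "u < v" "u \<le> y" "y \<le> v" "w \<noteq> 0 \<Longrightarrow> \<not> (u < -bb/w \<and> -bb/w < v)"
  shows "max (bb + w*y) 0 = (if bb + w*((u+v)/2) > 0 then bb + w*y else 0)"
proof (cases "w = 0")
  case True then show ?thesis by auto
next
  case False
  define t where "t = -bb/w"
  have eq: "\<And>z. bb + w*z = w*(z - t)" unfolding t_def using False by (simp add: field_simps)
  have tt: "t \<le> u \<or> v \<le> t" using assms(4)[OF False] unfolding t_def by auto
  show ?thesis
  proof (cases "w > 0")
    case True
    show ?thesis unfolding eq using tt True assms(1-3)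
      by (auto simp: zero_less_mult_iff mult_le_0_iff max_def)
  next
    case wn: False
    then have "w < 0" using False by auto
    show ?thesis unfolding eq using tt \<open>w < 0\<close> assms(1-3)
      by (auto simp: zero_less_mult_iff mult_le_0_iff max_def mult_less_0_iff)
  qed
qed

lemma ind_int_pos:
  fixes g :: "real \<Rightarrow> real"
  assumes "w > 0"
  shows "integral {a..b} (\<lambda>y. g y * indicator {0<..} (bb + w*y)) = integral ({-bb/w..} \<inter> {a..b}) g"
proof -
  have eq: "\<And>z. bb + w*z = w*(z - (-bb/w))" using assms by (simp add: field_simps)
  have "integral {a..b} (\<lambda>y. g y * indicator {0<..} (bb + w*y))
      = integral {a..b} (\<lambda>y. if y \<in> {-bb/w..} then g y else 0)"
  proof (rule integral_spike[where S="{-bb/w}"])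
    show "negligible {-bb/w}" by simp
    fix y assume "y \<in> {a..b} - {-bb/w}"
    then show "(if y \<in> {-bb/w..} then g y else 0) = g y * indicator {0<..} (bb + w*y)"
      unfolding eq using assms by (auto simp: indicator_def zero_less_mult_iff)
  qed
  also have "\<dots> = integral ({-bb/w..} \<inter> {a..b}) g" by (rule integral_restrict_Int)
  finally show ?thesis .
qed

lemma ind_int_neg:
  fixes g :: "real \<Rightarrow> real"
  assumes "w < 0"
  shows "integral {a..b} (\<lambda>y. g y * indicator {0<..} (bb + w*y)) = integral ({..-bb/w} \<inter> {a..b}) g"
proof -
  have eq: "\<And>z. bb + w*z = w*(z - (-bb/w))" using assms by (simp add: field_simps)
  have "integral {a..b} (\<lambda>y. g y * indicator {0<..} (bb + w*y))
      = integral {a..b} (\<lambda>y. if y \<in> {..-bb/w} then g y else 0)"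
  proof (rule integral_spike[where S="{-bb/w}"])
    show "negligible {-bb/w}" by simp
    fix y assume "y \<in> {a..b} - {-bb/w}"
    then show "(if y \<in> {..-bb/w} then g y else 0) = g y * indicator {0<..} (bb + w*y)"
      unfolding eq using assms by (auto simp: indicator_def zero_less_mult_iff)
  qed
  also have "\<dots> = integral ({..-bb/w} \<inter> {a..b}) g" by (rule integral_restrict_Int)
  finally show ?thesis .
qed

lemma partB:
  fixes w bb v :: "nat \<Rightarrow> real" and c \<alpha> \<beta> a b :: real and H :: nat
  defines "e \<equiv> (\<lambda>y. c + (\<Sum>i=1..H. v i * max (bb i + w i * y) 0) - (\<alpha>*y+\<beta>))"
  assumes ab: "a < b"
    and GC: "integral {a..b} e = 0"
    and GB: "\<And>i. i \<in> {1..H} \<Longrightarrow> v i \<noteq> 0 \<Longrightarrow> integral {a..b} (\<lambda>y. e y * indicator {0<..} (bb i + w i * y)) = 0"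
    and GW: "\<And>i. i \<in> {1..H} \<Longrightarrow> v i \<noteq> 0 \<Longrightarrow> integral {a..b} (\<lambda>y. e y * y * indicator {0<..} (bb i + w i * y)) = 0"
    and pos: "integral {a..b} (\<lambda>y. (e y)^2) > 0"
  shows "integral {a..b} (\<lambda>y. (e y)^2) \<ge> \<alpha>^2 * (b-a)^3 / (12 * (2 * real_of_int \<lfloor>real H / 2\<rfloor> + 1)^4)"
proof -
  define g1 where "g1 = (\<lambda>y. e y * y)"
  define g2 where "g2 = (\<lambda>y. (e y)^2)"
  have conte: "continuous_on UNIV e" unfolding e_def by (intro continuous_intros)
  have int0: "\<And>u v. e integrable_on {u..v}"
    by (rule integrable_continuous_real) (use conte in \<open>auto intro: continuous_on_subset\<close>)
  have int1: "\<And>u v. g1 integrable_on {u..v}" unfolding g1_def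
    by (rule integrable_continuous_real) (use conte in \<open>auto intro!: continuous_intros intro: continuous_on_subset\<close>)
  have int2: "\<And>u v. g2 integrable_on {u..v}" unfolding g2_def
    by (rule integrable_continuous_real) (use conte in \<open>auto intro!: continuous_intros intro: continuous_on_subset\<close>)
  define P where "P = integral {a..b} g1"
  define S where "S = {t. \<exists>i\<in>{1..H}. v i \<noteq> 0 \<and> w i \<noteq> 0 \<and> t = - bb i / w i \<and> a < t \<and> t < b}"
  have Ssub: "S \<subseteq> (\<lambda>i. - bb i / w i) ` {1..H}" unfolding S_def by auto
  have finS: "finite S" using Ssub finite_subset by blast
  have "card S \<le> card ((\<lambda>i. - bb i / w i) ` {1..H})" by (rule card_mono[OF _ Ssub]) simp
  also have "\<dots> \<le> card {1..H}" by (rule card_image_le) simp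
  finally have cardS: "card S \<le> H" by simp
  have abS: "a \<notin> S" "b \<notin> S" unfolding S_def by auto
  define T where "T = insert a (insert b S)"
  define m where "m = card S"
  have finT: "finite T" unfolding T_def using finS by auto
  have cardT: "card T = m + 2" unfolding T_def m_def using finS abS ab by auto
  have Tab: "T \<subseteq> {a..b}" unfolding T_def S_def using ab by auto
  define xs where "xs = sorted_list_of_set T"
  define x where "x = (\<lambda>j. xs ! j)"
  have len: "length xs = m+2" unfolding xs_def using cardT by simp
  have setxs: "set xs = T" unfolding xs_def using finT by simp
  have sw: "sorted_wrt (<) xs" unfolding xs_def by (rule strict_sorted_list_of_set)
  have mono: "\<And>j l. j < l \<Longrightarrow> l \<le> m+1 \<Longrightarrow> x j < x l"
    using sorted_wrt_nth_less[OF sw] len unfolding x_def by auto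
  have monole: "\<And>j l. j \<le> l \<Longrightarrow> l \<le> m+1 \<Longrightarrow> x j \<le> x l"
    using mono by (metis le_less)
  have xT: "\<And>j. j \<le> m+1 \<Longrightarrow> x j \<in> T" unfolding x_def using len setxs
    by (metis Suc_eq_plus1 add_2_eq_Suc' le_imp_less_Suc nth_mem)
  have Tx: "\<And>s. s \<in> T \<Longrightarrow> \<exists>j\<le>m+1. x j = s" unfolding x_def using len setxs
    by (metis Suc_eq_plus1 add_2_eq_Suc' in_set_conv_nth less_Suc_eq_le)
  have xab: "\<And>j. j \<le> m+1 \<Longrightarrow> a \<le> x j \<and> x j \<le> b" using xT Tab by (meson atLeastAtMost_iff subsetD)
  have x0: "x 0 = a"
  proof -
    obtain j where j: "j \<le> m+1" "x j = a" using Tx[of a] unfolding T_def by auto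
    show ?thesis
    proof (cases "j = 0")
      case False
      then have "x 0 < x j" using mono j by auto
      then show ?thesis using xab[of 0] j by auto
    qed (use j in auto)
  qed
  have xl: "x (m+1) = b"
  proof -
    obtain j where j: "j \<le> m+1" "x j = b" using Tx[of b] unfolding T_def by auto
    show ?thesis
    proof (cases "j = m+1")
      case False
      then have "x j < x (m+1)" using mono j by auto
      then show ?thesis using xab[of "m+1"] j by auto
    qed (use j in auto)
  qed
  have rev: "\<And>j l. j \<le> m+1 \<Longrightarrow> l \<le> m+1 \<Longrightarrow> x j < x l \<Longrightarrow> j < l"
    using monole by (meson leD le_less_linear)
  have between: "\<And>k s. k \<le> m \<Longrightarrow> s \<in> T \<Longrightarrow> \<not> (x k < s \<and> s < x (Suc k))"
  proof
    fix k s assume k: "k \<le> m" and s: "s \<in> T" and bt: "x k < s \<and> s < x (Suc k)"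
    obtain j where j: "j \<le> m+1" "x j = s" using Tx[OF s] by auto
    have "k < j" using rev[of k j] j bt k by auto
    moreover have "j < Suc k" using rev[of j "Suc k"] j bt k by auto
    ultimately show False by auto
  qed
  define Lk where "Lk = (\<lambda>k. x (Suc k) - x k)"
  define mid where "mid = (\<lambda>k. (x k + x (Suc k))/2)"
  define act where "act = (\<lambda>i k. bb i + w i * mid k > 0)"
  define q where "q = (\<lambda>k. (\<Sum>i=1..H. if act i k then v i * w i else 0) - \<alpha>)"
  define p where "p = (\<lambda>k. c + (\<Sum>i=1..H. if act i k then v i * bb i else 0) - \<beta>)"
  have Lpos: "\<And>k. k \<le> m \<Longrightarrow> Lk k > 0" unfolding Lk_def using mono by auto
  have piece: "\<And>k y. k \<le> m \<Longrightarrow> x k \<le> y \<Longrightarrow> y \<le> x (Suc k) \<Longrightarrow> e y = p k + q k * y"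
  proof -
    fix k y assume k: "k \<le> m" and y1: "x k \<le> y" and y2: "y \<le> x (Suc k)"
    have each: "v i * max (bb i + w i * y) 0 = (if act i k then v i * bb i else 0) + (if act i k then v i * w i else 0) * y"
      if i: "i \<in> {1..H}" for i
    proof (cases "v i = 0")
      case True then show ?thesis by simp
    next
      case False
      have nb: "\<not> (x k < -bb i / w i \<and> -bb i / w i < x (Suc k))" if w: "w i \<noteq> 0"
      proof
        assume bt: "x k < -bb i / w i \<and> -bb i / w i < x (Suc k)"
        have "a < -bb i / w i" using xab[of k] k bt by auto
        moreover have "-bb i / w i < b" using xab[of "Suc k"] k bt by auto
        ultimately have "-bb i/w i \<in> S" using w False i unfolding S_def by blast
        then show False using between[OF k] bt unfolding T_def by auto
      qed
      have "max (bb i + w i * y) 0 = (if act i k then bb i + w i * y else 0)"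
        unfolding act_def mid_def
        by (rule relu_piece[OF mono[of k "Suc k"] y1 y2 nb]) (use k in auto)
      then show ?thesis by (auto simp: algebra_simps)
    qed
    have "(\<Sum>i=1..H. v i * max (bb i + w i * y) 0)
       = (\<Sum>i=1..H. (if act i k then v i * bb i else 0) + (if act i k then v i * w i else 0) * y)"
      by (rule sum.cong) (auto simp: each)
    also have "\<dots> = (\<Sum>i=1..H. if act i k then v i * bb i else 0) + (\<Sum>i=1..H. if act i k then v i * w i else 0) * y"
      by (simp add: sum.distrib sum_distrib_right)
    finally show "e y = p k + q k * y" unfolding e_def p_def q_def by (simp add: algebra_simps)
  qed
  have cum: "integral {a..x j} g = (\<Sum>k<j. integral {x k..x (Suc k)} g)"
    if gi: "\<And>u v. g integrable_on {u..v}" and j: "j \<le> m+1" for g :: "real \<Rightarrow> real" and j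
    using j
  proof (induction j)
    case 0 then show ?case using x0 by simp
  next
    case (Suc j)
    have "integral {a..x j} g + integral {x j..x (Suc j)} g = integral {a..x (Suc j)} g"
      by (rule icomb) (use xab[of j] monole[of j "Suc j"] Suc.prems gi in auto)
    then show ?case using Suc by simp
  qed

  have tpos: "integral {-bb i/w i..b} e = 0 \<and> integral {-bb i/w i..b} g1 = 0"
    if i: "i \<in> {1..H}" "v i \<noteq> 0" "w i > 0" "a \<le> -bb i/w i" "-bb i/w i \<le> b" for i
  proof -
    have st: "{-bb i/w i..} \<inter> {a..b} = {-bb i/w i..b}" using i by auto
    show ?thesis
      using GB[OF i(1,2)] GW[OF i(1,2)] ind_int_pos[OF i(3), of a b e "bb i"]
        ind_int_pos[OF i(3), of a b g1 "bb i"] unfolding st g1_def by simp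
  qed
  have tpos': "P = 0"
    if i: "i \<in> {1..H}" "v i \<noteq> 0" "w i > 0" "-bb i/w i \<le> a" for i
  proof -
    have st: "{-bb i/w i..} \<inter> {a..b} = {a..b}" using i by auto
    show ?thesis
      using GW[OF i(1,2)] ind_int_pos[OF i(3), of a b g1 "bb i"] unfolding st g1_def P_def by simp
  qed
  have tneg: "integral {a..-bb i/w i} e = 0 \<and> integral {a..-bb i/w i} g1 = 0"
    if i: "i \<in> {1..H}" "v i \<noteq> 0" "w i < 0" "a \<le> -bb i/w i" "-bb i/w i \<le> b" for i
  proof -
    have st: "{..-bb i/w i} \<inter> {a..b} = {a..-bb i/w i}" using i by auto
    show ?thesis
      using GB[OF i(1,2)] GW[OF i(1,2)] ind_int_neg[OF i(3), of a b e "bb i"]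
        ind_int_neg[OF i(3), of a b g1 "bb i"] unfolding st g1_def by simp
  qed
  have tneg': "P = 0"
    if i: "i \<in> {1..H}" "v i \<noteq> 0" "w i < 0" "b \<le> -bb i/w i" for i
  proof -
    have st: "{..-bb i/w i} \<inter> {a..b} = {a..b}" using i by auto
    show ?thesis
      using GW[OF i(1,2)] ind_int_neg[OF i(3), of a b g1 "bb i"] unfolding st g1_def P_def by simp
  qed
  have splitab: "integral {a..t} g = integral {a..b} g - integral {t..b} g"
    if "a \<le> t" "t \<le> b" "\<And>u v. g integrable_on {u..v}" for g :: "real \<Rightarrow> real" and t
    using icomb[of a t b g] that by simp
  have Spt: "(integral {a..t} e = 0) \<and> ((w i > 0 \<and> integral {a..t} g1 = P) \<or> (w i < 0 \<and> integral {a..t} g1 = 0))"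
    if i: "i \<in> {1..H}" "v i \<noteq> 0" "w i \<noteq> 0" "t = - bb i / w i" "a < t" "t < b" for i t
  proof (cases "w i > 0")
    case True
    then show ?thesis using tpos[OF i(1,2) True] i splitab[of t e] splitab[of t g1] int0 int1 GC
      unfolding P_def by auto
  next
    case False
    then have "w i < 0" using i by auto
    then show ?thesis using tneg[OF i(1,2) \<open>w i < 0\<close>] i by auto
  qed
  have M0: "integral {a..x j} e = 0" if j: "j \<le> m+1" for j
  proof -
    consider "j = 0" | "j = m+1" | "0 < j" "j \<le> m" using j by linarith
    then show ?thesis
    proof cases
      case 1 then show ?thesis using x0 by simp
    next
      case 2 then show ?thesis using xl GC by simp
    next
      case 3
      have "x 0 < x j" "x j < x (m+1)" using mono 3 by auto
      then have "x j \<in> S" using xT[of j] 3 x0 xl unfolding T_def by auto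
      then obtain i where "i \<in> {1..H}" "v i \<noteq> 0" "w i \<noteq> 0" "x j = - bb i / w i" "a < x j" "x j < b"
        unfolding S_def by blast
      from Spt[OF this] show ?thesis by blast
    qed
  qed
  have pint: "integral {x k..x (Suc k)} e = 0" if k: "k \<le> m" for k
  proof -
    have "integral {a..x k} e + integral {x k..x (Suc k)} e = integral {a..x (Suc k)} e"
      by (rule icomb) (use xab[of k] monole[of k "Suc k"] k int0 in auto)
    then show ?thesis using M0[of k] M0[of "Suc k"] k by simp
  qed
  have pq: "p k = - q k * mid k" if k: "k \<le> m" for k
  proof -
    have "integral {x k..x (Suc k)} e = integral {x k..x (Suc k)} (\<lambda>y. p k + q k * y + 0 * y^2)"
      by (rule integral_cong) (use piece k in auto)
    also have "\<dots> = p k * (x (Suc k) - x k) + q k * ((x (Suc k))^2 - (x k)^2)/2"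
      using integral_quad[of "x k" "x (Suc k)" "p k" "q k" 0] monole[of k "Suc k"] k by simp
    also have "\<dots> = Lk k * (p k + q k * mid k)"
      unfolding Lk_def mid_def by (simp add: field_simps power2_eq_square)
    finally have "Lk k * (p k + q k * mid k) = 0" using pint[OF k] by simp
    then show ?thesis using Lpos[OF k] by simp
  qed
  define cv where "cv = (\<lambda>j. e (x j))"
  have cvR: "cv (Suc k) = q k * Lk k / 2" if k: "k \<le> m" for k
    unfolding cv_def using piece[OF k, of "x (Suc k)"] monole[of k "Suc k"] k pq[OF k]
    unfolding Lk_def mid_def by (simp add: field_simps)
  have cvL: "cv k = - q k * Lk k / 2" if k: "k \<le> m" for k
    unfolding cv_def using piece[OF k, of "x k"] monole[of k "Suc k"] k pq[OF k]
    unfolding Lk_def mid_def by (simp add: field_simps)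
  have cvalt: "cv j = (-1)^j * cv 0" if "j \<le> m+1" for j
    using that
  proof (induction j)
    case 0 then show ?case by simp
  next
    case (Suc j)
    then have "cv (Suc j) = - cv j" using cvR[of j] cvL[of j] by simp
    then show ?case using Suc by simp
  qed
  have cvsq: "(cv j)^2 = (cv 0)^2" if "j \<le> m+1" for j
    using cvalt[OF that] by (simp add: power_mult_distrib power2_eq_square flip: power_mult_distrib)
  have I1p: "integral {x k..x (Suc k)} g1 = cv (Suc k) * (Lk k)^2 / 6" if k: "k \<le> m" for k
  proof -
    have "integral {x k..x (Suc k)} g1 = integral {x k..x (Suc k)} (\<lambda>y. 0 + p k * y + q k * y^2)"
      by (rule integral_cong) (use piece k in \<open>auto simp: g1_def power2_eq_square algebra_simps\<close>)
    also have "\<dots> = p k * ((x (Suc k))^2 - (x k)^2)/2 + q k * ((x (Suc k))^3 - (x k)^3)/3"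
      using integral_quad[of "x k" "x (Suc k)" 0 "p k" "q k"] monole[of k "Suc k"] k by simp
    also have "\<dots> = cv (Suc k) * (Lk k)^2 / 6"
      unfolding cvR[OF k] pq[OF k] Lk_def mid_def
      by (simp add: field_simps power2_eq_square power3_eq_cube)
    finally show ?thesis .
  qed
  have I2p: "integral {x k..x (Suc k)} g2 = (cv 0)^2 * Lk k / 3" if k: "k \<le> m" for k
  proof -
    have "integral {x k..x (Suc k)} g2 = integral {x k..x (Suc k)} (\<lambda>y. (p k)^2 + (2 * p k * q k) * y + (q k)^2 * y^2)"
      by (rule integral_cong) (use piece k in \<open>auto simp: g2_def power2_eq_square algebra_simps\<close>)
    also have "\<dots> = (p k)^2 * (x (Suc k) - x k) + (2 * p k * q k) * ((x (Suc k))^2 - (x k)^2)/2 + (q k)^2 * ((x (Suc k))^3 - (x k)^3)/3"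
      using integral_quad monole[of k "Suc k"] k by simp
    also have "\<dots> = (cv (Suc k))^2 * Lk k / 3"
      unfolding cvR[OF k] pq[OF k] Lk_def mid_def
      by (simp add: field_simps power2_eq_square power3_eq_cube)
    finally show ?thesis using cvsq[of "Suc k"] k by simp
  qed
  have sumL: "(\<Sum>k<m+1. Lk k) = b - a"
    unfolding Lk_def using sum_lessThan_telescope[of x "m+1"] x0 xl by simp
  have I2tot: "integral {a..b} g2 = (cv 0)^2 * (b-a)/3"
  proof -
    have "integral {a..b} g2 = (\<Sum>k<m+1. integral {x k..x (Suc k)} g2)"
      using cum[OF int2, of "m+1"] xl by simp
    also have "\<dots> = (\<Sum>k<m+1. (cv 0)^2 / 3 * Lk k)"
      by (rule sum.cong) (auto simp: I2p)
    also have "\<dots> = (cv 0)^2 / 3 * (\<Sum>k<m+1. Lk k)" by (rule sum_distrib_left[symmetric])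
    also have "\<dots> = (cv 0)^2 / 3 * (b - a)" using sumL by simp
    finally show ?thesis by simp
  qed
  have cv0: "cv 0 \<noteq> 0" using pos I2tot unfolding g2_def by auto
  define Mv where "Mv = (\<lambda>j. integral {a..x j} g1)"
  have Mstep: "Mv (Suc k) = Mv k + cv (Suc k) * (Lk k)^2/6" if k: "k \<le> m" for k
  proof -
    have "integral {a..x k} g1 + integral {x k..x (Suc k)} g1 = integral {a..x (Suc k)} g1"
      by (rule icomb) (use xab[of k] monole[of k "Suc k"] k int1 in auto)
    then show ?thesis using I1p[OF k] unfolding Mv_def by simp
  qed
  have dnz: "cv (Suc k) * (Lk k)^2/6 \<noteq> 0" if k: "k \<le> m" for k
    using cvalt[of "Suc k"] k cv0 Lpos[OF k] by simp
  have MvP: "Mv (m+1) = P" unfolding Mv_def P_def using xl by simp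
  have Mv0: "Mv 0 = 0" unfolding Mv_def using x0 by simp
  have Mint: "Mv j = 0 \<or> Mv j = P" if "0 < j" "j \<le> m" for j
  proof -
    have "x 0 < x j" "x j < x (m+1)" using mono that by auto
    then have "x j \<in> S" using xT[of j] that x0 xl unfolding T_def by auto
    then obtain i where "i \<in> {1..H}" "v i \<noteq> 0" "w i \<noteq> 0" "x j = - bb i / w i" "a < x j" "x j < b"
      unfolding S_def by blast
    from Spt[OF this] show ?thesis unfolding Mv_def by blast
  qed
  have par: "Mv j = (if even j then 0 else P)" if "j \<le> m+1" for j
    using that
  proof (induction j)
    case 0 then show ?case using Mv0 by simp
  next
    case (Suc j)
    have st: "Mv (Suc j) = Mv j + cv (Suc j) * (Lk j)^2/6" using Mstep[of j] Suc.prems by simp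
    have nz: "cv (Suc j) * (Lk j)^2/6 \<noteq> 0" using dnz[of j] Suc.prems by simp
    have IH: "Mv j = (if even j then 0 else P)" using Suc by simp
    show ?case
    proof (cases "even j")
      case True
      then have "Mv (Suc j) \<noteq> 0" using nz IH by (simp add: st)
      then have "Mv (Suc j) = P" using Mint[of "Suc j"] MvP Suc.prems by (cases "Suc j = m+1") auto
      then show ?thesis using True by simp
    next
      case False
      then have "Mv (Suc j) \<noteq> P" using nz IH by (simp add: st)
      then have "Mv (Suc j) = 0" using Mint[of "Suc j"] MvP Suc.prems by (cases "Suc j = m+1") auto
      then show ?thesis using False by simp
    qed
  qed
  have Pnz: "P \<noteq> 0"
  proof
    assume "P = 0"
    then have "Mv 1 = 0" using par[of 1] by simp
    then show False using Mstep[of 0] dnz[of 0] Mv0 by simp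
  qed
  have meven: "even m"
    using par[of "m+1"] MvP Pnz by (auto split: if_splits)

  have dsq: "(cv (Suc k) * (Lk k)^2/6)^2 = P^2" if k: "k \<le> m" for k
  proof -
    have d: "cv (Suc k) * (Lk k)^2/6 = Mv (Suc k) - Mv k" using Mstep[OF k] by simp
    have "Mv (Suc k) - Mv k = P \<or> Mv (Suc k) - Mv k = - P" using par[of k] par[of "Suc k"] k by auto
    then show ?thesis unfolding d by auto
  qed
  have Leq: "Lk k = Lk 0" if k: "k \<le> m" for k
  proof -
    have e1: "(cv (Suc k) * (Lk k)^2/6)^2 = (cv (Suc 0) * (Lk 0)^2/6)^2"
      using dsq[OF k] dsq[of 0] by simp
    have "(cv (Suc k))^2 * (Lk k)^4 = (cv (Suc 0))^2 * (Lk 0)^4"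
      using e1 by (simp add: power_mult_distrib power_divide flip: power_mult)
    then have "(Lk k)^4 = (Lk 0)^4" using cvsq[of "Suc k"] cvsq[of 1] k cv0 by simp
    then show ?thesis using Lpos[OF k] Lpos[of 0]
      by (intro power_eq_imp_eq_base[of "Lk k" 4 "Lk 0"]) auto
  qed
  define L where "L = (b-a)/(real m + 1)"
  have LL: "Lk k = L" if k: "k \<le> m" for k
  proof -
    have "(\<Sum>k<m+1. Lk k) = (\<Sum>k<m+1. Lk 0)" by (rule sum.cong) (simp, intro Leq, simp)
    then have "b - a = (real m + 1) * Lk 0" using sumL by (simp add: algebra_simps)
    then have "Lk 0 = L" unfolding L_def by (simp add: eq_divide_eq)
    then show ?thesis using Leq[OF k] by simp
  qed
  have Lp: "L > 0" using Lpos[of 0] LL[of 0] by simp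
  have qk: "q k = - 2 * ((-1)^k * cv 0) / L" if k: "k \<le> m" for k
  proof -
    have "cv (Suc k) = q k * L / 2" using cvR[OF k] LL[OF k] by simp
    moreover have "cv (Suc k) = - ((-1)^k * cv 0)" using cvalt[of "Suc k"] k by simp
    ultimately show ?thesis using Lp by (simp add: field_simps)
  qed
  have sum1: "(\<Sum>k<m+1. (-1)^k * q k) = real (m+1) * (- 2 * cv 0 / L)"
  proof -
    have "(\<Sum>k<m+1. (-1)^k * q k) = (\<Sum>k<m+1. - 2 * cv 0 / L)"
    proof (rule sum.cong)
      fix k assume "k \<in> {..<m+1}"
      then have "(-1)^k * q k = - 2 * (((-1)^k * (-1)^k) * cv 0) / L" using qk[of k] by (simp add: field_simps)
      also have "\<dots> = - 2 * cv 0 / L" by (simp flip: power_mult_distrib)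
      finally show "(-1)^k * q k = - 2 * cv 0 / L" .
    qed simp
    then show ?thesis by (simp only: sum_constant card_lessThan)
  qed
  have actsum: "(\<Sum>k<m+1. (-1)^k * (if act i k then v i * w i else 0)) = 0" if i: "i \<in> {1..H}" for i
  proof (cases "v i = 0 \<or> w i = 0")
    case True then show ?thesis by (intro sum.neutral) auto
  next
    case False
    then have vi: "v i \<noteq> 0" and wi: "w i \<noteq> 0" by auto
    define t where "t = -bb i / w i"
    have eqt: "\<And>z. bb i + w i * z = w i * (z - t)" unfolding t_def using wi by (simp add: field_simps)
    have midb: "x k < mid k \<and> mid k < x (Suc k)" if "k \<le> m" for k
      using mono[of k "Suc k"] that unfolding mid_def by auto
    have split1: "(\<Sum>k<m+1. (-1::real)^k * (if k < j then 1 else 0)) = (\<Sum>k<j. (-1)^k)" if "j \<le> m+1" for j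
    proof -
      have "(\<Sum>k<m+1. (-1::real)^k * (if k < j then 1 else 0)) = (\<Sum>k\<in>{..<m+1}. if k \<in> {..<j} then (-1)^k else 0)"
        by (rule sum.cong) auto
      also have "\<dots> = (\<Sum>k\<in>{..<m+1} \<inter> {..<j}. (-1)^k)" by (rule sum.inter_restrict[symmetric]) simp
      also have "{..<m+1} \<inter> {..<j} = {..<j}" using that by auto
      finally show ?thesis by simp
    qed
    have alt_m: "(\<Sum>k<m+1. (-1::real)^k) = 1" using altsum[of "m+1"] meven by simp
    show ?thesis
    proof (cases "w i > 0")
      case wp: True
      have actk: "act i k \<longleftrightarrow> mid k > t" for k unfolding act_def eqt using wp
        by (simp add: zero_less_mult_iff)
      consider "t \<le> a" | "b \<le> t" | "a < t" "t < b" by linarith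
      then show ?thesis
      proof cases
        case 1 then show ?thesis using tpos'[OF i vi wp] Pnz unfolding t_def by simp
      next
        case 2
        have "\<not> act i k" if "k \<le> m" for k
          using midb[OF that] xab[of "Suc k"] that 2 actk by auto
        then show ?thesis by (intro sum.neutral) auto
      next
        case 3
        then have "t \<in> S" unfolding S_def t_def using i vi wi by blast
        then obtain j where j: "j \<le> m+1" "x j = t" using Tx unfolding T_def by blast
        have "Mv j = P" using Spt[OF i vi wi t_def 3] wp j unfolding Mv_def by auto
        then have jodd: "odd j" using par[of j] j Pnz by (auto split: if_splits)
        have actj: "act i k \<longleftrightarrow> \<not> k < j" if "k \<le> m" for k
        proof
          assume "act i k"
          then have "x j < mid k" using actk j by simp
          then have "x j < x (Suc k)" using midb[OF that] by simp
          then show "\<not> k < j" using rev[of j "Suc k"] j that by auto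
        next
          assume "\<not> k < j"
          then have "x j \<le> x k" using monole[of j k] that by auto
          then show "act i k" using actk j midb[OF that] by simp
        qed
        have "(\<Sum>k<m+1. (-1)^k * (if act i k then v i * w i else 0))
            = (\<Sum>k<m+1. v i * w i * ((-1)^k - (-1)^k * (if k < j then 1 else 0)))"
          by (rule sum.cong) (auto simp: actj)
        also have "\<dots> = v i * w i * ((\<Sum>k<m+1. (-1)^k) - (\<Sum>k<m+1. (-1::real)^k * (if k < j then 1 else 0)))"
          by (simp only: sum_subtractf[symmetric] sum_distrib_left)
        also have "\<dots> = 0" using split1[of j] j alt_m altsum[of j] jodd by simp
        finally show ?thesis .
      qed
    next
      case wn: False
      then have wn: "w i < 0" using wi by auto
      have actk: "act i k \<longleftrightarrow> mid k < t" for k unfolding act_def eqt using wn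
        by (auto simp: zero_less_mult_iff)
      consider "b \<le> t" | "t \<le> a" | "a < t" "t < b" by linarith
      then show ?thesis
      proof cases
        case 1 then show ?thesis using tneg'[OF i vi wn] Pnz unfolding t_def by simp
      next
        case 2
        have "\<not> act i k" if "k \<le> m" for k
          using midb[OF that] xab[of k] that 2 actk by auto
        then show ?thesis by (intro sum.neutral) auto
      next
        case 3
        then have "t \<in> S" unfolding S_def t_def using i vi wi by blast
        then obtain j where j: "j \<le> m+1" "x j = t" using Tx unfolding T_def by blast
        have "Mv j = 0" using Spt[OF i vi wi t_def 3] wn j unfolding Mv_def by auto
        then have jeven: "even j" using par[of j] j Pnz by (auto split: if_splits)
        have actj: "act i k \<longleftrightarrow> k < j" if "k \<le> m" for k
        proof
          assume "act i k"
          then have "mid k < x j" using actk j by simp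
          then have "x k < x j" using midb[OF that] by simp
          then show "k < j" using rev[of k j] j that by auto
        next
          assume "k < j"
          then have "x (Suc k) \<le> x j" using monole[of "Suc k" j] j by auto
          then show "act i k" using actk j midb[OF that] by simp
        qed
        have "(\<Sum>k<m+1. (-1)^k * (if act i k then v i * w i else 0))
            = (\<Sum>k<m+1. v i * w i * ((-1)^k * (if k < j then 1 else 0)))"
          by (rule sum.cong) (auto simp: actj)
        also have "\<dots> = v i * w i * (\<Sum>k<m+1. (-1::real)^k * (if k < j then 1 else 0))"
          by (simp only: sum_distrib_left)
        also have "\<dots> = 0" using split1[of j] j altsum[of j] jeven by simp
        finally show ?thesis .
      qed
    qed
  qed
  have sum2: "(\<Sum>k<m+1. (-1)^k * q k) = - \<alpha>"
  proof -
    have "(\<Sum>k<m+1. (-1)^k * q k)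
        = (\<Sum>k<m+1. (\<Sum>i=1..H. (-1)^k * (if act i k then v i * w i else 0)) - \<alpha> * (-1)^k)"
      unfolding q_def by (rule sum.cong) (auto simp: algebra_simps sum_distrib_left)
    also have "\<dots> = (\<Sum>i=1..H. \<Sum>k<m+1. (-1)^k * (if act i k then v i * w i else 0)) - \<alpha> * (\<Sum>k<m+1. (-1)^k)"
      by (simp only: sum_subtractf sum_distrib_left sum.swap[of _ "{..<m+1}"])
    also have "\<dots> = - \<alpha>" using actsum altsum[of "m+1"] meven by simp
    finally show ?thesis .
  qed
  have cvval: "cv 0 = \<alpha> * L / (2 * (m+1))"
  proof -
    have "real (m+1) * (- 2 * cv 0 / L) = - \<alpha>" using sum1 sum2 by simp
    then show ?thesis using Lp by (simp add: field_simps)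
  qed
  have I2val: "integral {a..b} g2 = \<alpha>^2 * (b-a)^3 / (12 * (real m + 1)^4)"
  proof -
    define n where "n = real m + 1"
    have n: "n > 0" unfolding n_def by simp
    have c0: "cv 0 = \<alpha> * (b-a) / (2 * n^2)"
    proof -
      have n': "real m + 1 \<noteq> 0" by simp
      show ?thesis unfolding cvval L_def n_def using n' by (simp add: power2_eq_square field_simps)
    qed
    have "integral {a..b} g2 = (\<alpha> * (b-a) / (2 * n^2))^2 * (b-a) / 3" unfolding I2tot c0 by simp
    also have "\<dots> = \<alpha>^2 * (b-a)^3 / (12 * n^4)" using n by (simp add: field_simps eval_nat_numeral)
    finally show ?thesis unfolding n_def .
  qed
  have mK: "real m + 1 \<le> 2 * real_of_int \<lfloor>real H / 2\<rfloor> + 1"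
  proof -
    obtain r where r: "m = 2*r" using meven by auto
    have "real r \<le> real H / 2" using cardS r unfolding m_def by simp
    then have "int r \<le> \<lfloor>real H / 2\<rfloor>" by (simp add: le_floor_iff)
    then show ?thesis using r by simp
  qed
  have "(real m + 1)^4 \<le> (2 * real_of_int \<lfloor>real H / 2\<rfloor> + 1)^4"
    by (rule power_mono[OF mK]) simp
  then have "\<alpha>^2 * (b-a)^3 / (12 * (2 * real_of_int \<lfloor>real H / 2\<rfloor> + 1)^4) \<le> \<alpha>^2 * (b-a)^3 / (12 * (real m + 1)^4)"
    using ab by (intro divide_left_mono mult_left_mono) (auto intro!: mult_pos_pos)
  then show ?thesis using I2val unfolding g2_def by simp
qed

lemma M_integral:
  fixes M :: "real measure" and a b \<rho> :: real and g :: "real \<Rightarrow> real"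
  assumes M_sets: "sets M = sets (restrict_space lborel {a..b})"
    and M_meas: "\<forall>E\<in>sets M. emeasure M E = ennreal \<rho> * emeasure lborel E"
    and rho: "\<rho> \<ge> 0"
    and g: "continuous_on {a..b} g"
  shows "(\<integral>y. g y \<partial>M) = \<rho> * integral {a..b} g"
proof -
  define N where "N = restrict_space lborel {a..b}"
  have Nsp: "{a..b} \<inter> space lborel \<in> sets lborel" by simp
  have MN: "M = density N (\<lambda>_. ennreal \<rho>)"
  proof (rule measure_eqI)
    show "sets M = sets (density N (\<lambda>_. ennreal \<rho>))" using M_sets unfolding N_def by simp
    fix A assume A: "A \<in> sets M"
    then have AN: "A \<in> sets N" using M_sets unfolding N_def by simp
    then have Asub: "A \<subseteq> {a..b}" unfolding N_def using sets.sets_into_space by fastforce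
    have "emeasure (density N (\<lambda>_. ennreal \<rho>)) A = ennreal \<rho> * emeasure N A"
      by (rule emeasure_density_const[OF AN])
    also have "emeasure N A = emeasure lborel A"
      unfolding N_def by (rule emeasure_restrict_space[OF Nsp Asub])
    finally show "emeasure M A = emeasure (density N (\<lambda>_. ennreal \<rho>)) A"
      using M_meas A by simp
  qed
  have gm: "g \<in> borel_measurable N"
  proof -
    have "g \<in> borel_measurable (restrict_space borel {a..b})"
      by (rule borel_measurable_continuous_on_restrict[OF g])
    moreover have "sets (restrict_space borel {a..b}) = sets N"
      unfolding N_def by (simp add: sets_restrict_space)
    ultimately show ?thesis using measurable_cong_sets[of "restrict_space borel {a..b}" N borel borel] by blast
  qed
  have "(\<integral>y. g y \<partial>M) = (\<integral>y. \<rho> * g y \<partial>N)"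
    unfolding MN by (subst integral_density) (use gm rho in auto)
  also have "\<dots> = (\<integral>y. indicator {a..b} y *\<^sub>R (\<rho> * g y) \<partial>lborel)"
    unfolding N_def by (rule integral_restrict_space[OF Nsp])
  also have "\<dots> = integral {a..b} (\<lambda>y. \<rho> * g y)"
  proof -
    have c: "continuous_on {a..b} (\<lambda>y. \<rho> * g y)" using g by (intro continuous_intros)
    show ?thesis
      using set_borel_integral_eq_integral(2)[OF borel_integrable_atLeastAtMost'[OF c]]
      unfolding set_lebesgue_integral_def by simp
  qed
  finally show ?thesis by simp
qed

definition Uf :: "(real \<Rightarrow> real) \<Rightarrow> nat \<Rightarrow> real \<Rightarrow> real \<Rightarrow> (nat \<Rightarrow> real) \<Rightarrow> real \<Rightarrow> real" where
  "Uf Rr H \<alpha> \<beta> \<theta> y = \<alpha>*y + \<beta> - \<theta>(3*H+1) - (\<Sum>i=1..H. \<theta>(2*H+i) * Rr (\<theta>(H+i) + \<theta> i * y))"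

definition DUf :: "(real \<Rightarrow> real) \<Rightarrow> (real \<Rightarrow> real) \<Rightarrow> nat \<Rightarrow> (nat \<Rightarrow> real) \<Rightarrow> (nat \<Rightarrow> real) \<Rightarrow> real \<Rightarrow> real" where
  "DUf Rr Rd H \<theta> d y = - (d(3*H+1) + (\<Sum>i=1..H. d(2*H+i) * Rr (\<theta>(H+i) + \<theta> i*y)
      + \<theta>(2*H+i) * (Rd (\<theta>(H+i) + \<theta> i * y) * (d(H+i) + d i * y))))"

lemma Uf_deriv:
  fixes \<phi> :: "real \<Rightarrow> nat \<Rightarrow> real"
  assumes Rd: "\<And>z. (Rr has_field_derivative Rd z) (at z)"
    and phi: "\<And>p. ((\<lambda>t. \<phi> t p) has_field_derivative d p) (at t within S)"
  shows "((\<lambda>t. Uf Rr H \<alpha> \<beta> (\<phi> t) y) has_field_derivative DUf Rr Rd H (\<phi> t) d y) (at t within S)"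
proof -
  have inner: "((\<lambda>t. \<phi> t (H+i) + \<phi> t i * y) has_field_derivative d(H+i) + d i * y) (at t within S)" for i
    by (intro DERIV_add DERIV_cmult_right phi)
  have trm: "((\<lambda>t. \<phi> t (2*H+i) * Rr (\<phi> t (H+i) + \<phi> t i * y)) has_field_derivative
     d(2*H+i) * Rr (\<phi> t (H+i) + \<phi> t i*y) + \<phi> t (2*H+i) * (Rd (\<phi> t (H+i) + \<phi> t i * y) * (d(H+i) + d i * y))) (at t within S)" for i
    by (rule DERIV_cong[OF DERIV_mult'[OF phi[of "2*H+i"] DERIV_chain2[OF Rd inner[of i]]]]) (simp add: algebra_simps)
  have sum: "((\<lambda>t. \<Sum>i=1..H. \<phi> t (2*H+i) * Rr (\<phi> t (H+i) + \<phi> t i * y)) has_field_derivative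
      (\<Sum>i=1..H. d(2*H+i) * Rr (\<phi> t (H+i) + \<phi> t i*y) + \<phi> t (2*H+i) * (Rd (\<phi> t (H+i) + \<phi> t i * y) * (d(H+i) + d i * y)))) (at t within S)"
    by (rule DERIV_sum) (rule trm)
  have lin: "((\<lambda>t. \<alpha>*y+\<beta> - \<phi> t (3*H+1)) has_field_derivative 0 - d(3*H+1)) (at t within S)"
    by (rule DERIV_diff[OF DERIV_const phi[of "3*H+1"]])
  show ?thesis unfolding Uf_def DUf_def
    by (rule DERIV_cong[OF DERIV_diff[OF lin sum]]) simp
qed

lemma cont_comp_UNIV:
  assumes "continuous_on UNIV g" "continuous_on S h"
  shows "continuous_on S (\<lambda>x. g (h x))"
  by (rule continuous_on_compose2[OF assms(1) assms(2)]) auto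

lemma cont_upd:
  fixes \<theta> :: "nat \<Rightarrow> real"
  shows "continuous_on S (\<lambda>z::real\<times>real. (\<theta>(k := fst z)) p)"
  by (cases "p = k") (auto intro: continuous_intros)

lemma approx_grad:
  fixes M :: "real measure" and a b \<rho> \<alpha> \<beta> :: real and f Rr Rd :: "real \<Rightarrow> real"
  assumes M_sets: "sets M = sets (restrict_space lborel {a..b})"
    and M_meas: "\<forall>E\<in>sets M. emeasure M E = ennreal \<rho> * emeasure lborel E"
    and rho: "\<rho> \<ge> 0" and ab: "a \<le> b"
    and f_affine: "\<forall>x\<in>{a..b}. f x = \<alpha> * x + \<beta>"
    and Rd: "\<And>z. (Rr has_field_derivative Rd z) (at z)"
    and contR: "continuous_on UNIV Rr" and contRd: "continuous_on UNIV Rd"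
  shows "risk1_approx_grad M f H Rr \<theta> k
     = \<rho> * integral {a..b} (\<lambda>y. 2 * Uf Rr H \<alpha> \<beta> \<theta> y * DUf Rr Rd H \<theta> (\<lambda>p. if p = k then 1 else 0) y)"
proof -
  have sp: "space M = {a..b}" using sets_eq_imp_space_eq[OF M_sets] by simp
  have contU: "continuous_on S (\<lambda>y. Uf Rr H \<alpha> \<beta> \<theta>' y)" for S \<theta>'
    unfolding Uf_def by (intro continuous_intros cont_comp_UNIV[OF contR])
  have risk_eq: "risk1_approx M f H Rr \<theta>' = \<rho> * integral {a..b} (\<lambda>y. (Uf Rr H \<alpha> \<beta> \<theta>' y)^2)" for \<theta>'
  proof -
    have "risk1_approx M f H Rr \<theta>' = (\<integral>y. (Uf Rr H \<alpha> \<beta> \<theta>' y)^2 \<partial>M)"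
      unfolding risk1_approx_def by (rule Bochner_Integration.integral_cong) (use sp f_affine in \<open>auto simp: Uf_def\<close>)
    also have "\<dots> = \<rho> * integral {a..b} (\<lambda>y. (Uf Rr H \<alpha> \<beta> \<theta>' y)^2)"
      by (rule M_integral[OF M_sets M_meas rho]) (intro continuous_intros contU)
    finally show ?thesis .
  qed
  define \<delta> where "\<delta> = (\<lambda>p. if p = k then 1 else (0::real))"
  have phi: "((\<lambda>t. (\<theta>(k:=t)) p) has_field_derivative \<delta> p) (at t within UNIV)" for p t
    by (cases "p = k") (auto simp: \<delta>_def)
  define F where "F = (\<lambda>x t. (Uf Rr H \<alpha> \<beta> (\<theta>(k:=x)) t)^2)"
  define Fx where "Fx = (\<lambda>x t. 2 * Uf Rr H \<alpha> \<beta> (\<theta>(k:=x)) t * DUf Rr Rd H (\<theta>(k:=x)) \<delta> t)"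
  have dF: "((\<lambda>x. F x t) has_field_derivative Fx x t) (at x within UNIV)" for x t
    unfolding F_def Fx_def power2_eq_square
    by (rule DERIV_cong[OF DERIV_mult'[OF Uf_deriv[OF Rd phi] Uf_deriv[OF Rd phi]]]) (simp add: fun_upd_def algebra_simps)
  have iF: "F x integrable_on cbox a b" for x
    unfolding F_def cbox_interval
    by (rule integrable_continuous_real) (intro continuous_intros contU)
  have cFx: "continuous_on (UNIV \<times> cbox a b) (\<lambda>(x, t). Fx x t)"
  proof -
    have "continuous_on UNIV (\<lambda>z::real\<times>real. Fx (fst z) (snd z))"
      unfolding Fx_def Uf_def DUf_def
      by (intro continuous_intros cont_comp_UNIV[OF contR] cont_comp_UNIV[OF contRd] cont_upd)
    then show ?thesis unfolding case_prod_beta' by (rule continuous_on_subset) simp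
  qed
  have L: "((\<lambda>x. integral (cbox a b) (F x)) has_field_derivative integral (cbox a b) (Fx (\<theta> k))) (at (\<theta> k) within UNIV)"
    by (rule leibniz_rule_field_derivative[OF dF iF cFx]) auto
  have "((\<lambda>t. risk1_approx M f H Rr (\<theta>(k:=t))) has_field_derivative \<rho> * integral {a..b} (Fx (\<theta> k))) (at (\<theta> k))"
    unfolding risk_eq using DERIV_cmult[OF L, of \<rho>] unfolding F_def cbox_interval by simp
  then have "risk1_approx_grad M f H Rr \<theta> k = \<rho> * integral {a..b} (Fx (\<theta> k))"
    unfolding risk1_approx_grad_def by (rule DERIV_imp_deriv)
  then show ?thesis unfolding Fx_def \<delta>_def by simp
qed

lemma mvt_bound:
  fixes g g' :: "real \<Rightarrow> real"
  assumes d: "\<And>x. (g has_field_derivative g' x) (at x)"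
    and bd: "\<And>x. \<bar>x\<bar> \<le> Z \<Longrightarrow> \<bar>g' x\<bar> \<le> C"
    and z: "\<bar>z\<bar> \<le> Z"
  shows "\<bar>g z - g 0\<bar> \<le> C * \<bar>z\<bar>"
proof -
  have cont: "continuous_on S g" for S
    using d by (meson DERIV_continuous_on has_field_derivative_at_within)
  have dif: "g differentiable (at x)" for x using d real_differentiable_def by blast
  consider "z = 0" | "0 < z" | "z < 0" by linarith
  then show ?thesis
  proof cases
    case 1 then show ?thesis by simp
  next
    case 2
    obtain l \<xi> where l: "0 < \<xi>" "\<xi> < z" "DERIV g \<xi> :> l" "g z - g 0 = (z - 0) * l"
      using MVT[OF 2 cont dif] by blast
    have "l = g' \<xi>" using DERIV_unique[OF l(3) d] .
    moreover have "\<bar>g' \<xi>\<bar> \<le> C" using bd l z 2 by auto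
    ultimately show ?thesis using l(4) 2 by (simp add: abs_mult mult.commute mult_left_mono)
  next
    case 3
    obtain l \<xi> where l: "z < \<xi>" "\<xi> < 0" "DERIV g \<xi> :> l" "g 0 - g z = (0 - z) * l"
      using MVT[OF 3 cont dif] by blast
    have "l = g' \<xi>" using DERIV_unique[OF l(3) d] .
    moreover have "\<bar>g' \<xi>\<bar> \<le> C" using bd l z 3 by auto
    moreover have "\<bar>g z - g 0\<bar> = \<bar>z\<bar> * \<bar>l\<bar>" using l(4) 3 by (simp add: abs_mult abs_minus_commute)
    ultimately show ?thesis using mult_left_mono[of "\<bar>g' \<xi>\<bar>" C "\<bar>z\<bar>"] by (simp add: mult.commute)
  qed
qed

lemma Uf_bound:
  assumes Bu: "\<And>i. i \<in> {1..H} \<Longrightarrow> \<bar>Rr (\<theta>(H+i) + \<theta> i * y)\<bar> \<le> Bu" and y: "\<bar>y\<bar> \<le> Y"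
  shows "\<bar>Uf Rr H \<alpha> \<beta> \<theta> y\<bar> \<le> \<bar>\<alpha>\<bar>*Y + \<bar>\<beta>\<bar> + \<bar>\<theta>(3*H+1)\<bar> + (\<Sum>i=1..H. \<bar>\<theta>(2*H+i)\<bar> * Bu)"
proof -
  have s: "\<bar>\<Sum>i=1..H. \<theta>(2*H+i) * Rr (\<theta>(H+i) + \<theta> i * y)\<bar> \<le> (\<Sum>i=1..H. \<bar>\<theta>(2*H+i)\<bar> * Bu)"
  proof -
    have "\<bar>\<Sum>i=1..H. \<theta>(2*H+i) * Rr (\<theta>(H+i) + \<theta> i * y)\<bar> \<le> (\<Sum>i=1..H. \<bar>\<theta>(2*H+i) * Rr (\<theta>(H+i) + \<theta> i * y)\<bar>)"
      by (rule sum_abs)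
    also have "\<dots> \<le> (\<Sum>i=1..H. \<bar>\<theta>(2*H+i)\<bar> * Bu)"
      by (rule sum_mono) (auto simp: abs_mult intro!: mult_left_mono Bu)
    finally show ?thesis .
  qed
  have "\<bar>\<alpha>*y\<bar> \<le> \<bar>\<alpha>\<bar>*Y" using y by (simp add: abs_mult mult_left_mono)
  then show ?thesis unfolding Uf_def using s by linarith
qed

lemma DUf_bound:
  assumes Bu: "\<And>i. i \<in> {1..H} \<Longrightarrow> \<bar>Rr (\<theta>(H+i) + \<theta> i * y)\<bar> \<le> Bu"
    and Bv: "\<And>i. i \<in> {1..H} \<Longrightarrow> \<bar>Rd (\<theta>(H+i) + \<theta> i * y)\<bar> \<le> Bv" and y: "\<bar>y\<bar> \<le> Y"
  shows "\<bar>DUf Rr Rd H \<theta> d y\<bar> \<le> \<bar>d(3*H+1)\<bar> + (\<Sum>i=1..H. \<bar>d(2*H+i)\<bar> * Bu + \<bar>\<theta>(2*H+i)\<bar> * (Bv * (\<bar>d(H+i)\<bar> + \<bar>d i\<bar> * Y)))"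
proof -
  have t: "\<bar>d(2*H+i) * Rr (\<theta>(H+i) + \<theta> i*y) + \<theta>(2*H+i) * (Rd (\<theta>(H+i) + \<theta> i * y) * (d(H+i) + d i * y))\<bar>
      \<le> \<bar>d(2*H+i)\<bar> * Bu + \<bar>\<theta>(2*H+i)\<bar> * (Bv * (\<bar>d(H+i)\<bar> + \<bar>d i\<bar> * Y))" if i: "i \<in> {1..H}" for i
  proof -
    have 1: "\<bar>d(2*H+i) * Rr (\<theta>(H+i) + \<theta> i*y)\<bar> \<le> \<bar>d(2*H+i)\<bar> * Bu"
      by (simp add: abs_mult mult_left_mono Bu[OF i])
    have 2: "\<bar>d(H+i) + d i * y\<bar> \<le> \<bar>d(H+i)\<bar> + \<bar>d i\<bar> * Y"
    proof -
      have "\<bar>d i * y\<bar> \<le> \<bar>d i\<bar> * Y" using y by (simp add: abs_mult mult_left_mono)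
      then show ?thesis using abs_triangle_ineq[of "d(H+i)" "d i * y"] by linarith
    qed
    have 3: "\<bar>Rd (\<theta>(H+i) + \<theta> i * y) * (d(H+i) + d i * y)\<bar> \<le> Bv * (\<bar>d(H+i)\<bar> + \<bar>d i\<bar> * Y)"
      unfolding abs_mult by (rule mult_mono[OF Bv[OF i] 2]) (use Bv[OF i] in auto)
    have 4: "\<bar>\<theta>(2*H+i) * (Rd (\<theta>(H+i) + \<theta> i * y) * (d(H+i) + d i * y))\<bar> \<le> \<bar>\<theta>(2*H+i)\<bar> * (Bv * (\<bar>d(H+i)\<bar> + \<bar>d i\<bar> * Y))"
      unfolding abs_mult[of "\<theta>(2*H+i)"] by (rule mult_left_mono[OF 3]) simp
    show ?thesis using 1 4 by linarith
  qed
  have s: "\<bar>\<Sum>i=1..H. d(2*H+i) * Rr (\<theta>(H+i) + \<theta> i*y) + \<theta>(2*H+i) * (Rd (\<theta>(H+i) + \<theta> i * y) * (d(H+i) + d i * y))\<bar>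
     \<le> (\<Sum>i=1..H. \<bar>d(2*H+i)\<bar> * Bu + \<bar>\<theta>(2*H+i)\<bar> * (Bv * (\<bar>d(H+i)\<bar> + \<bar>d i\<bar> * Y)))"
    by (rule order_trans[OF sum_abs sum_mono]) (rule t)
  show ?thesis unfolding DUf_def using s by linarith
qed

lemma R_facts:
  fixes R :: "real \<Rightarrow> real"
  assumes "R C1_differentiable_on UNIV"
  shows "\<And>z. (R has_field_derivative deriv R z) (at z)" "continuous_on UNIV R" "continuous_on UNIV (deriv R)"
proof -
  have dif: "\<And>x. R differentiable at x" and cv: "continuous_on UNIV (\<lambda>x. vector_derivative R (at x))"
    using assms unfolding C1_differentiable_on_eq by auto
  show d: "\<And>z. (R has_field_derivative deriv R z) (at z)"
    using dif DERIV_deriv_iff_real_differentiable by blast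
  show "continuous_on UNIV R" using d by (meson DERIV_continuous_on has_field_derivative_at_within)
  have "vector_derivative R (at x) = deriv R x" for x
    by (rule vector_derivative_at) (use d[of x] has_real_derivative_iff_has_vector_derivative in blast)
  then show "continuous_on UNIV (deriv R)" using cv by simp
qed

lemma grad_limit:
  fixes H :: nat and a b \<alpha> \<beta> \<rho> :: real
    and f :: "real \<Rightarrow> real" and M :: "real measure"
    and R :: "nat \<Rightarrow> real \<Rightarrow> real"
  assumes ab: "a \<le> b"
    and f_affine: "\<forall>x\<in>{a..b}. f x = \<alpha> * x + \<beta>"
    and rho: "\<rho> \<ge> 0"
    and M_sets: "sets M = sets (restrict_space lborel {a..b})"
    and M_meas: "\<forall>E\<in>sets M. emeasure M E = ennreal \<rho> * emeasure lborel E"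
    and R_C1: "\<forall>r. R r C1_differentiable_on UNIV"
    and R_lim: "\<forall>x. (\<lambda>r. \<bar>R r x - max x 0\<bar> + \<bar>deriv (R r) x - indicator {0<..} x\<bar>)
                    \<longlonglongrightarrow> 0"
    and R_bdd: "\<forall>x. \<exists>C. \<forall>r. \<forall>y\<in>{-\<bar>x\<bar>..\<bar>x\<bar>}. \<bar>deriv (R r) y\<bar> \<le> C"
  shows "(\<lambda>r. risk1_approx_grad M f H (R r) \<theta> k) \<longlonglongrightarrow>
     \<rho> * integral {a..b} (\<lambda>y. 2 * Uf (\<lambda>z. max z 0) H \<alpha> \<beta> \<theta> y
         * DUf (\<lambda>z. max z 0) (indicator {0<..}) H \<theta> (\<lambda>p. if p = k then 1 else 0) y)"
proof -
  define \<delta> where "\<delta> = (\<lambda>p. if p = k then 1 else (0::real))"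
  define Fr where "Fr = (\<lambda>r y. 2 * Uf (R r) H \<alpha> \<beta> \<theta> y * DUf (R r) (deriv (R r)) H \<theta> \<delta> y)"
  define Fl where "Fl = (\<lambda>y. 2 * Uf (\<lambda>z. max z 0) H \<alpha> \<beta> \<theta> y * DUf (\<lambda>z. max z 0) (indicator {0<..}) H \<theta> \<delta> y)"
  note RF = R_facts[OF R_C1[rule_format]]
  have eqr: "risk1_approx_grad M f H (R r) \<theta> k = \<rho> * integral {a..b} (Fr r)" for r
    unfolding Fr_def \<delta>_def by (rule approx_grad[OF M_sets M_meas rho ab f_affine RF])
  have lim1: "(\<lambda>r. R r z) \<longlonglongrightarrow> max z 0" for z
  proof -
    have "(\<lambda>r. R r z - max z 0) \<longlonglongrightarrow> 0"
      by (rule Lim_null_comparison[OF _ R_lim[rule_format, of z]]) (auto intro!: always_eventually)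
    then show ?thesis using LIM_zero_iff by blast
  qed
  have lim2: "(\<lambda>r. deriv (R r) z) \<longlonglongrightarrow> indicator {0<..} z" for z
  proof -
    have "(\<lambda>r. deriv (R r) z - indicator {0<..} z) \<longlonglongrightarrow> 0"
      by (rule Lim_null_comparison[OF _ R_lim[rule_format, of z]]) (auto intro!: always_eventually)
    then show ?thesis using LIM_zero_iff by blast
  qed
  have conv: "(\<lambda>r. Fr r y) \<longlonglongrightarrow> Fl y" for y
    unfolding Fr_def Fl_def Uf_def DUf_def
    by (intro tendsto_intros lim1 lim2)
  define Y where "Y = \<bar>a\<bar> + \<bar>b\<bar>"
  have yY: "\<bar>y\<bar> \<le> Y" if "y \<in> {a..b}" for y using that unfolding Y_def by auto
  define Z where "Z = (\<Sum>i=1..H. \<bar>\<theta>(H+i)\<bar> + \<bar>\<theta> i\<bar> * Y)"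
  have zZ: "\<bar>\<theta>(H+i) + \<theta> i * y\<bar> \<le> Z" if i: "i \<in> {1..H}" and y: "\<bar>y\<bar> \<le> Y" for i y
  proof -
    have "\<bar>\<theta>(H+i) + \<theta> i * y\<bar> \<le> \<bar>\<theta>(H+i)\<bar> + \<bar>\<theta> i\<bar> * Y"
    proof -
      have "\<bar>\<theta> i * y\<bar> \<le> \<bar>\<theta> i\<bar> * Y" using y by (simp add: abs_mult mult_left_mono)
      then show ?thesis using abs_triangle_ineq[of "\<theta>(H+i)" "\<theta> i * y"] by linarith
    qed
    also have "\<dots> \<le> Z" unfolding Z_def
      by (rule member_le_sum[of i "{1..H}" "\<lambda>i. \<bar>\<theta>(H+i)\<bar> + \<bar>\<theta> i\<bar> * Y"]) (use i Y_def in auto)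
    finally show ?thesis .
  qed
  obtain C where C: "\<And>r y. y \<in> {-\<bar>Z\<bar>..\<bar>Z\<bar>} \<Longrightarrow> \<bar>deriv (R r) y\<bar> \<le> C"
    using R_bdd by blast
  have C0: "C \<ge> 0" using C[of 0 0] by auto
  have CZ: "\<bar>deriv (R r) x\<bar> \<le> C" if "\<bar>x\<bar> \<le> Z" for r x
  proof -
    have "x \<in> {-\<bar>Z\<bar>..\<bar>Z\<bar>}" using that by auto
    then show ?thesis by (rule C)
  qed
  obtain B0 where B0: "\<And>r. \<bar>R r 0\<bar> \<le> B0"
  proof -
    have "Bseq (\<lambda>r. R r 0)" using lim1[of 0] convergent_imp_Bseq convergentI by blast
    then obtain K where "\<forall>n. norm (R n 0) \<le> K" by (auto elim!: BseqE)
    then show ?thesis using that by auto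
  qed
  define B1 where "B1 = B0 + C * Z"
  have RB: "\<bar>R r z\<bar> \<le> B1" if "\<bar>z\<bar> \<le> Z" for r z
  proof -
    have "\<bar>R r z - R r 0\<bar> \<le> C * \<bar>z\<bar>" by (rule mvt_bound[OF RF(1) CZ that])
    moreover have "C * \<bar>z\<bar> \<le> C * Z" using that C0 by (simp add: mult_left_mono)
    ultimately show ?thesis using B0[of r] unfolding B1_def by linarith
  qed
  define K1 where "K1 = \<bar>\<alpha>\<bar>*Y + \<bar>\<beta>\<bar> + \<bar>\<theta>(3*H+1)\<bar> + (\<Sum>i=1..H. \<bar>\<theta>(2*H+i)\<bar> * B1)"
  define K2 where "K2 = \<bar>\<delta>(3*H+1)\<bar> + (\<Sum>i=1..H. \<bar>\<delta>(2*H+i)\<bar> * B1 + \<bar>\<theta>(2*H+i)\<bar> * (C * (\<bar>\<delta>(H+i)\<bar> + \<bar>\<delta> i\<bar> * Y)))"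
  have le: "norm (Fr r y) \<le> 2 * K1 * K2" if y: "y \<in> {a..b}" for r y
  proof -
    have rb: "\<bar>R r (\<theta>(H+i) + \<theta> i * y)\<bar> \<le> B1" if "i \<in> {1..H}" for i
      using RB zZ yY[OF y] that by blast
    have db: "\<bar>deriv (R r) (\<theta>(H+i) + \<theta> i * y)\<bar> \<le> C" if "i \<in> {1..H}" for i
      using CZ zZ yY[OF y] that by blast
    have b1: "\<bar>Uf (R r) H \<alpha> \<beta> \<theta> y\<bar> \<le> K1" unfolding K1_def
      by (rule Uf_bound[where Rr="R r" and \<theta>=\<theta> and H=H and y=y and Bu=B1 and Y=Y, OF rb yY[OF y]])
    have b2: "\<bar>DUf (R r) (deriv (R r)) H \<theta> \<delta> y\<bar> \<le> K2" unfolding K2_def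
      by (rule DUf_bound[where Rr="R r" and Rd="deriv (R r)" and \<theta>=\<theta> and H=H and y=y and Bu=B1 and Bv=C and Y=Y, OF rb db yY[OF y]])
    have "\<bar>Uf (R r) H \<alpha> \<beta> \<theta> y\<bar> * \<bar>DUf (R r) (deriv (R r)) H \<theta> \<delta> y\<bar> \<le> K1 * K2"
      by (rule mult_mono[OF b1 b2]) (use b1 in auto)
    then show ?thesis unfolding Fr_def by (simp add: abs_mult)
  qed
  have iF: "Fr r integrable_on {a..b}" for r
  proof -
    have "continuous_on {a..b} (Fr r)"
      unfolding Fr_def Uf_def DUf_def
      by (intro continuous_intros cont_comp_UNIV[OF RF(2)] cont_comp_UNIV[OF RF(3)])
    then show ?thesis by (rule integrable_continuous_real)
  qed
  have ih: "(\<lambda>_. 2 * K1 * K2) integrable_on {a..b}"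
    by (rule integrable_continuous_real) (rule continuous_on_const)
  have "(\<lambda>r. integral {a..b} (Fr r)) \<longlonglongrightarrow> integral {a..b} Fl"
    by (rule dominated_convergence(2)[OF iF ih le conv])
  then have "(\<lambda>r. \<rho> * integral {a..b} (Fr r)) \<longlonglongrightarrow> \<rho> * integral {a..b} Fl"
    by (rule tendsto_mult_left)
  then show ?thesis unfolding eqr Fl_def \<delta>_def .
qed

lemma DUf_c: "DUf Rr Rd H \<theta> (\<lambda>p. if p = 3*H+1 then 1 else 0) y = -1"
proof -
  have "(\<Sum>i=1..H. (if 2*H+i = 3*H+1 then 1 else 0) * Rr (\<theta>(H+i) + \<theta> i*y)
      + \<theta>(2*H+i) * (Rd (\<theta>(H+i) + \<theta> i * y) * ((if H+i = 3*H+1 then 1 else 0) + (if i = 3*H+1 then 1 else 0) * y))) = 0"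
    by (rule sum.neutral) auto
  then show ?thesis unfolding DUf_def by simp
qed

lemma DUf_b:
  assumes j: "j \<in> {1..H}"
  shows "DUf Rr Rd H \<theta> (\<lambda>p. if p = H+j then 1 else 0) y = - (\<theta>(2*H+j) * Rd (\<theta>(H+j) + \<theta> j * y))"
proof -
  have "(\<Sum>i=1..H. (if 2*H+i = H+j then 1 else 0) * Rr (\<theta>(H+i) + \<theta> i*y)
      + \<theta>(2*H+i) * (Rd (\<theta>(H+i) + \<theta> i * y) * ((if H+i = H+j then 1 else 0) + (if i = H+j then 1 else 0) * y)))
      = (\<Sum>i=1..H. if i = j then \<theta>(2*H+i) * Rd (\<theta>(H+i) + \<theta> i * y) else 0)"
    by (rule sum.cong) (use j in auto)
  also have "\<dots> = \<theta>(2*H+j) * Rd (\<theta>(H+j) + \<theta> j * y)" using j by simp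
  finally show ?thesis unfolding DUf_def using j by simp
qed

lemma DUf_w:
  assumes j: "j \<in> {1..H}"
  shows "DUf Rr Rd H \<theta> (\<lambda>p. if p = j then 1 else 0) y = - (\<theta>(2*H+j) * (Rd (\<theta>(H+j) + \<theta> j * y) * y))"
proof -
  have "(\<Sum>i=1..H. (if 2*H+i = j then 1 else 0) * Rr (\<theta>(H+i) + \<theta> i*y)
      + \<theta>(2*H+i) * (Rd (\<theta>(H+i) + \<theta> i * y) * ((if H+i = j then 1 else 0) + (if i = j then 1 else 0) * y)))
      = (\<Sum>i=1..H. if i = j then \<theta>(2*H+i) * (Rd (\<theta>(H+i) + \<theta> i * y) * y) else 0)"
    by (rule sum.cong) (use j in auto)
  also have "\<dots> = \<theta>(2*H+j) * (Rd (\<theta>(H+j) + \<theta> j * y) * y)" using j by simp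
  finally show ?thesis unfolding DUf_def using j by simp
qed

theorem proposition3p4:
  fixes H :: nat and a b \<alpha> \<beta> \<rho> :: real
    and f :: "real \<Rightarrow> real" and M :: "real measure"
    and R :: "nat \<Rightarrow> real \<Rightarrow> real"
    and G :: "(nat \<Rightarrow> real) \<Rightarrow> nat \<Rightarrow> real"
  assumes H: "H \<ge> 1"
    and ab: "a < b"
    and f_cont: "continuous_on {a..b} f"
    and f_affine: "\<forall>x\<in>{a..b}. f x = \<alpha> * x + \<beta>"
    and rho: "\<rho> > 0"
    and M_sets: "sets M = sets (restrict_space lborel {a..b})"
    and M_meas: "\<forall>E\<in>sets M. emeasure M E = ennreal \<rho> * emeasure lborel E"
    and R_C1: "\<forall>r. R r C1_differentiable_on UNIV"
    and R_lim: "\<forall>x. (\<lambda>r. \<bar>R r x - max x 0\<bar> + \<bar>deriv (R r) x - indicator {0<..} x\<bar>)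
                    \<longlonglongrightarrow> 0"
    and R_bdd: "\<forall>x. \<exists>C. \<forall>r. \<forall>y\<in>{-\<bar>x\<bar>..\<bar>x\<bar>}. \<bar>deriv (R r) y\<bar> \<le> C"
    and G_def: "\<forall>\<theta>. (\<forall>k\<in>{1..3*H+1}. convergent (\<lambda>r. risk1_approx_grad M f H (R r) \<theta> k))
                  \<longrightarrow> (\<forall>k\<in>{1..3*H+1}. (\<lambda>r. risk1_approx_grad M f H (R r) \<theta> k) \<longlonglongrightarrow> G \<theta> k)"
  shows "(\<exists>\<psi>. risk1 M f H \<psi> = (INF \<theta>. risk1 M f H \<theta>) \<and> (INF \<theta>. risk1 M f H \<theta>) = 0)
       \<and> (\<forall>\<theta>. (\<forall>k\<in>{1..3*H+1}. G \<theta> k = 0) \<and> risk1 M f H \<theta> > 0 \<longrightarrow>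
            risk1 M f H \<theta> \<ge> \<rho> * \<alpha>\<^sup>2 * (b - a) ^ 3 /
              (12 * (2 * real_of_int \<lfloor>real H / 2\<rfloor> + 1) ^ 4))"
proof -
  have sp: "space M = {a..b}" using sets_eq_imp_space_eq[OF M_sets] by simp
  have rho0: "\<rho> \<ge> 0" using rho by simp
  have ab': "a \<le> b" using ab by simp
  have nonneg: "risk1 M f H \<theta> \<ge> 0" for \<theta>
    unfolding risk1_def by (rule Bochner_Integration.integral_nonneg) simp
  define \<psi> where "\<psi> = (\<lambda>p::nat. if p = 1 then 1 else if p = H+1 then 1 - a
       else if p = 2*H+1 then \<alpha> else if p = 3*H+1 then \<beta> - \<alpha> * (1 - a) else (0::real))"
  have Npsi: "relu_net1 H \<psi> y = \<alpha>*y+\<beta>" if y: "y \<in> {a..b}" for y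
  proof -
    have "(\<Sum>i=1..H. \<psi> (2*H+i) * max (\<psi> (H+i) + \<psi> i * y) 0)
        = (\<Sum>i=1..H. if i = 1 then \<alpha> * max (1 - a + y) 0 else 0)"
      by (rule sum.cong) (use H in \<open>auto simp: \<psi>_def\<close>)
    also have "\<dots> = \<alpha> * (1 - a + y)" using H y by simp
    finally show ?thesis unfolding relu_net1_def using H by (simp add: \<psi>_def algebra_simps)
  qed
  have r0: "risk1 M f H \<psi> = 0"
  proof -
    have "risk1 M f H \<psi> = (\<integral>y. 0 \<partial>M)"
      unfolding risk1_def by (rule Bochner_Integration.integral_cong) (use sp f_affine Npsi in auto)
    then show ?thesis by simp
  qed
  have bdd: "bdd_below (range (risk1 M f H))" by (rule bdd_belowI[of _ 0]) (use nonneg in auto)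
  have INF0: "(INF \<theta>. risk1 M f H \<theta>) = 0"
  proof (rule antisym)
    show "(INF \<theta>. risk1 M f H \<theta>) \<le> 0" using cINF_lower[OF bdd, of \<psi>] r0 by simp
    show "0 \<le> (INF \<theta>. risk1 M f H \<theta>)" by (rule cINF_greatest) (use nonneg in auto)
  qed
  have part1: "\<exists>\<psi>. risk1 M f H \<psi> = (INF \<theta>. risk1 M f H \<theta>) \<and> (INF \<theta>. risk1 M f H \<theta>) = 0"
    using r0 INF0 by auto
  have part2: "risk1 M f H \<theta> \<ge> \<rho> * \<alpha>\<^sup>2 * (b - a) ^ 3 /
              (12 * (2 * real_of_int \<lfloor>real H / 2\<rfloor> + 1) ^ 4)"
    if G0: "\<forall>k\<in>{1..3*H+1}. G \<theta> k = 0" and pos: "risk1 M f H \<theta> > 0" for \<theta>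
  proof -
    define relu where "relu = (\<lambda>z::real. max z 0)"
    define ind where "ind = (indicator {0<..} :: real \<Rightarrow> real)"
    define lim where "lim = (\<lambda>k. \<rho> * integral {a..b} (\<lambda>y. 2 * Uf relu H \<alpha> \<beta> \<theta> y
         * DUf relu ind H \<theta> (\<lambda>p. if p = k then 1 else 0) y))"
    have lims: "(\<lambda>r. risk1_approx_grad M f H (R r) \<theta> k) \<longlonglongrightarrow> lim k" for k
      unfolding lim_def relu_def ind_def
      by (rule grad_limit[OF ab' f_affine rho0 M_sets M_meas R_C1 R_lim R_bdd])
    have Gk: "G \<theta> k = lim k" if k: "k \<in> {1..3*H+1}" for k
    proof -
      have "\<forall>k\<in>{1..3*H+1}. convergent (\<lambda>r. risk1_approx_grad M f H (R r) \<theta> k)"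
        using lims convergentI by blast
      then have "(\<lambda>r. risk1_approx_grad M f H (R r) \<theta> k) \<longlonglongrightarrow> G \<theta> k" using G_def k by blast
      then show ?thesis using lims[of k] LIMSEQ_unique by blast
    qed
    define e where "e = (\<lambda>y. \<theta>(3*H+1) + (\<Sum>i=1..H. \<theta>(2*H+i) * max (\<theta>(H+i) + \<theta> i * y) 0) - (\<alpha>*y+\<beta>))"
    have Ue: "Uf relu H \<alpha> \<beta> \<theta> y = - e y" for y unfolding Uf_def e_def relu_def by simp
    have conte: "continuous_on S e" for S unfolding e_def by (intro continuous_intros)
    have GCe: "integral {a..b} e = 0"
    proof -
      have "lim (3*H+1) = \<rho> * (2 * integral {a..b} e)"
        unfolding lim_def Ue DUf_c by simp
      moreover have "lim (3*H+1) = 0" using Gk[of "3*H+1"] G0 by simp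
      ultimately show ?thesis using rho by simp
    qed
    have GBe: "integral {a..b} (\<lambda>y. e y * indicator {0<..} (\<theta>(H+i) + \<theta> i * y)) = 0"
      if i: "i \<in> {1..H}" "\<theta>(2*H+i) \<noteq> 0" for i
    proof -
      have "lim (H+i) = \<rho> * (2 * \<theta>(2*H+i) * integral {a..b} (\<lambda>y. e y * indicator {0<..} (\<theta>(H+i) + \<theta> i * y)))"
      proof -
        have "(\<lambda>y. 2 * Uf relu H \<alpha> \<beta> \<theta> y * DUf relu ind H \<theta> (\<lambda>p. if p = H+i then 1 else 0) y)
            = (\<lambda>y. (2 * \<theta>(2*H+i)) * (e y * indicator {0<..} (\<theta>(H+i) + \<theta> i * y)))"
          by (rule ext) (simp add: Ue DUf_b[OF i(1)] ind_def)
        then show ?thesis unfolding lim_def Henstock_Kurzweil_Integration.integral_mult_right by simp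
      qed
      moreover have "lim (H+i) = 0" using Gk[of "H+i"] G0 i by simp
      ultimately show ?thesis using rho i by simp
    qed
    have GWe: "integral {a..b} (\<lambda>y. e y * y * indicator {0<..} (\<theta>(H+i) + \<theta> i * y)) = 0"
      if i: "i \<in> {1..H}" "\<theta>(2*H+i) \<noteq> 0" for i
    proof -
      have "lim i = \<rho> * (2 * \<theta>(2*H+i) * integral {a..b} (\<lambda>y. e y * y * indicator {0<..} (\<theta>(H+i) + \<theta> i * y)))"
      proof -
        have "(\<lambda>y. 2 * Uf relu H \<alpha> \<beta> \<theta> y * DUf relu ind H \<theta> (\<lambda>p. if p = i then 1 else 0) y)
            = (\<lambda>y. (2 * \<theta>(2*H+i)) * (e y * y * indicator {0<..} (\<theta>(H+i) + \<theta> i * y)))"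
          by (rule ext) (simp add: Ue DUf_w[OF i(1)] ind_def)
        then show ?thesis unfolding lim_def Henstock_Kurzweil_Integration.integral_mult_right by simp
      qed
      moreover have "lim i = 0" using Gk[of i] G0 i by simp
      ultimately show ?thesis using rho i by simp
    qed
    have riskeq: "risk1 M f H \<theta> = \<rho> * integral {a..b} (\<lambda>y. (e y)^2)"
    proof -
      have "risk1 M f H \<theta> = (\<integral>y. (e y)^2 \<partial>M)"
        unfolding risk1_def
        by (rule Bochner_Integration.integral_cong) (use sp f_affine in \<open>auto simp: e_def relu_net1_def power2_commute algebra_simps\<close>)
      also have "\<dots> = \<rho> * integral {a..b} (\<lambda>y. (e y)^2)"
        by (rule M_integral[OF M_sets M_meas rho0]) (intro continuous_intros conte)
      finally show ?thesis .
    qed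
    have posI: "integral {a..b} (\<lambda>y. (e y)^2) > 0" using pos rho unfolding riskeq
      by (simp add: zero_less_mult_iff)
    have main: "integral {a..b} (\<lambda>y. (e y)^2) \<ge> \<alpha>^2 * (b-a)^3 / (12 * (2 * real_of_int \<lfloor>real H / 2\<rfloor> + 1)^4)"
      using partB[where w="\<lambda>i. \<theta> i" and bb="\<lambda>i. \<theta>(H+i)" and v="\<lambda>i. \<theta>(2*H+i)" and c="\<theta>(3*H+1)"
          and \<alpha>=\<alpha> and \<beta>=\<beta> and a=a and b=b and H=H, OF ab GCe[unfolded e_def] GBe[unfolded e_def] GWe[unfolded e_def] posI[unfolded e_def]]
      unfolding e_def .
    have "\<rho> * (\<alpha>^2 * (b-a)^3 / (12 * (2 * real_of_int \<lfloor>real H / 2\<rfloor> + 1)^4)) \<le> \<rho> * integral {a..b} (\<lambda>y. (e y)^2)"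
      by (rule mult_left_mono[OF main rho0])
    then show ?thesis unfolding riskeq by simp
  qed
  show ?thesis using part1 part2 by blast
qed

end
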